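(* Consider clipped ADOPT with $\beta_1,\beta_2\in[0,1)$, $\epsilon>0$, learning rates $\alpha_t>0$, clipping values $c_t\ge0$, and deterministic $\theta_0$: $m_0=0$, $v_0=g_0\odot g_0$, and for $t=1,\dots,T$, $$m_t=\beta_1m_{t-1}+(1-\beta_1)\,\mathrm{Clip}\Big(\frac{g_t}{\max\{\sqrt{v_{t-1}},\epsilon\}},c_t\Big),\quad\theta_t=\theta_{t-1}-\alpha_tm_t,\quad v_t=\beta_2v_{t-1}+(1-\beta_2)g_t\odot g_t,$$ where $g_0,g_1,\dots$ are random vectors in $\mathbb{R}^D$ with $\mathbb{E}\|g_t\|^2\le G^2$ for all $t\ge0$. Then for all $0\le t\le T$, $$\mathbb{E}\big[\|m_t\|^2\big]\le\frac{2G^2}{\epsilon^2}.$$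
   Context: For $a\in\mathbb{R}^D$ and $c\ge0$, $\mathrm{Clip}(a,c)_i=\min\{\max\{a_i,-c\},c\}$. Norms are Euclidean; $\odot$, square root, division and $\max\{\cdot,\epsilon\}$ act elementwise. *)

theory Defs
  imports "HOL-Probability.Probability"
begin

definition Clip :: "real^'d \<Rightarrow> real \<Rightarrow> real^'d" where
  "Clip a c = (\<chi> i. min (max (a $ i) (- c)) c)"

text \<open>Second-moment estimate v_t of clipped ADOPT, for a fixed realisation g of the gradients.\<close>
fun adopt_v :: "real \<Rightarrow> (nat \<Rightarrow> real^'d) \<Rightarrow> nat \<Rightarrow> real^'d" where
  "adopt_v \<beta>2 g 0 = (\<chi> i. g 0 $ i * g 0 $ i)"
| "adopt_v \<beta>2 g (Suc t) =
     (\<chi> i. \<beta>2 * adopt_v \<beta>2 g t $ i + (1 - \<beta>2) * (g (Suc t) $ i * g (Suc t) $ i))"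

fun adopt_m :: "real \<Rightarrow> real \<Rightarrow> real \<Rightarrow> (nat \<Rightarrow> real) \<Rightarrow> (nat \<Rightarrow> real^'d) \<Rightarrow> nat \<Rightarrow> real^'d" where
  "adopt_m \<beta>1 \<beta>2 \<epsilon> c g 0 = 0"
| "adopt_m \<beta>1 \<beta>2 \<epsilon> c g (Suc t) =
     \<beta>1 *\<^sub>R adopt_m \<beta>1 \<beta>2 \<epsilon> c g t
     + (1 - \<beta>1) *\<^sub>R Clip (\<chi> i. g (Suc t) $ i / max (sqrt (adopt_v \<beta>2 g t $ i)) \<epsilon>) (c (Suc t))"

fun adopt_theta :: "real^'d \<Rightarrow> (nat \<Rightarrow> real) \<Rightarrow> real \<Rightarrow> real \<Rightarrow> real \<Rightarrow> (nat \<Rightarrow> real) \<Rightarrow> (nat \<Rightarrow> real^'d) \<Rightarrow> nat \<Rightarrow> real^'d" where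
  "adopt_theta \<theta>0 \<alpha> \<beta>1 \<beta>2 \<epsilon> c g 0 = \<theta>0"
| "adopt_theta \<theta>0 \<alpha> \<beta>1 \<beta>2 \<epsilon> c g (Suc t) =
     adopt_theta \<theta>0 \<alpha> \<beta>1 \<beta>2 \<epsilon> c g t - \<alpha> (Suc t) *\<^sub>R adopt_m \<beta>1 \<beta>2 \<epsilon> c g (Suc t)"

end

theory Submission
  imports Defs
begin

lemma clip_norm_le:
  assumes "c \<ge> 0"
  shows "norm (Clip z c) \<le> norm z"
proof (rule norm_le_componentwise_cart)
  fix i
  show "norm (Clip z c $ i) \<le> norm (z $ i)"
    using assms by (auto simp: Clip_def)
qed

lemma clip_term_le:
  fixes gg :: "real^'d" and v :: "real^'d"
  assumes "c \<ge> 0" "\<epsilon> > 0"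
  shows "norm (Clip (\<chi> i. gg $ i / max (sqrt (v $ i)) \<epsilon>) c) \<le> norm gg / \<epsilon>"
proof -
  have "norm (Clip (\<chi> i. gg $ i / max (sqrt (v $ i)) \<epsilon>) c) \<le> norm (\<chi> i. gg $ i / max (sqrt (v $ i)) \<epsilon>)"
    by (rule clip_norm_le[OF assms(1)])
  also have "\<dots> \<le> norm ((1/\<epsilon>) *\<^sub>R gg)"
  proof (rule norm_le_componentwise_cart)
    fix i
    have m: "max (sqrt (v $ i)) \<epsilon> \<ge> \<epsilon>" by simp
    have "\<bar>gg $ i\<bar> / max (sqrt (v $ i)) \<epsilon> \<le> \<bar>gg $ i\<bar> / \<epsilon>"
      by (rule divide_left_mono) (use m assms in auto)
    then show "norm ((\<chi> i. gg $ i / max (sqrt (v $ i)) \<epsilon>) $ i) \<le> norm (((1/\<epsilon>) *\<^sub>R gg) $ i)"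
      using assms by (simp add: abs_div)
  qed
  also have "\<dots> = norm gg / \<epsilon>" using assms by simp
  finally show ?thesis .
qed

lemma convex_sq:
  fixes x y :: "'a::real_normed_vector"
  assumes "0 \<le> a" "a \<le> 1"
  shows "(norm (a *\<^sub>R x + (1 - a) *\<^sub>R y))\<^sup>2 \<le> a * (norm x)\<^sup>2 + (1 - a) * (norm y)\<^sup>2"
proof -
  have n: "norm (a *\<^sub>R x + (1 - a) *\<^sub>R y) \<le> a * norm x + (1 - a) * norm y"
    using norm_triangle_ineq[of "a *\<^sub>R x" "(1 - a) *\<^sub>R y"] assms by simp
  have "(norm (a *\<^sub>R x + (1 - a) *\<^sub>R y))\<^sup>2 \<le> (a * norm x + (1 - a) * norm y)\<^sup>2"
    by (rule power_mono[OF n]) simp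
  also have "\<dots> = a * (norm x)\<^sup>2 + (1 - a) * (norm y)\<^sup>2 - a * (1 - a) * (norm x - norm y)\<^sup>2"
    by (simp add: power2_eq_square algebra_simps)
  also have "\<dots> \<le> a * (norm x)\<^sup>2 + (1 - a) * (norm y)\<^sup>2"
    using assms by simp
  finally show ?thesis .
qed

fun hb :: "real \<Rightarrow> real \<Rightarrow> (nat \<Rightarrow> 'w \<Rightarrow> real^'d) \<Rightarrow> nat \<Rightarrow> 'w \<Rightarrow> real" where
  "hb b e g 0 = (\<lambda>w. 0)"
| "hb b e g (Suc t) = (\<lambda>w. b * hb b e g t w + (1 - b) * ((norm (g (Suc t) w))\<^sup>2 / e\<^sup>2))"

theorem lemmaG13:
  fixes M :: "'w measure" and g :: "nat \<Rightarrow> 'w \<Rightarrow> real^'d"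
    and \<beta>1 \<beta>2 \<epsilon> G :: real and \<alpha> c :: "nat \<Rightarrow> real" and T t :: nat
  assumes "prob_space M"
    and "0 \<le> \<beta>1" "\<beta>1 < 1" "0 \<le> \<beta>2" "\<beta>2 < 1" "\<epsilon> > 0"
    and "\<And>s. \<alpha> s > 0" and "\<And>s. c s \<ge> 0"
    and "\<And>s. g s \<in> borel_measurable M"
    and "\<And>s. integrable M (\<lambda>\<omega>. (norm (g s \<omega>))\<^sup>2)"
    and "\<And>s. prob_space.expectation M (\<lambda>\<omega>. (norm (g s \<omega>))\<^sup>2) \<le> G\<^sup>2"
    and "t \<le> T"
  shows "prob_space.expectation M (\<lambda>\<omega>. (norm (adopt_m \<beta>1 \<beta>2 \<epsilon> c (\<lambda>s. g s \<omega>) t))\<^sup>2)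
           \<le> 2 * G\<^sup>2 / \<epsilon>\<^sup>2"
proof -
  have pt: "(norm (adopt_m \<beta>1 \<beta>2 \<epsilon> c (\<lambda>s. g s w) n))\<^sup>2 \<le> hb \<beta>1 \<epsilon> g n w" for n w
  proof (induction n)
    case 0
    then show ?case by simp
  next
    case (Suc n)
    let ?m = "adopt_m \<beta>1 \<beta>2 \<epsilon> c (\<lambda>s. g s w) n"
    let ?x = "Clip (\<chi> i. g (Suc n) w $ i / max (sqrt (adopt_v \<beta>2 (\<lambda>s. g s w) n $ i)) \<epsilon>) (c (Suc n))"
    have "(norm (adopt_m \<beta>1 \<beta>2 \<epsilon> c (\<lambda>s. g s w) (Suc n)))\<^sup>2 = (norm (\<beta>1 *\<^sub>R ?m + (1 - \<beta>1) *\<^sub>R ?x))\<^sup>2"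
      by simp
    also have "\<dots> \<le> \<beta>1 * (norm ?m)\<^sup>2 + (1 - \<beta>1) * (norm ?x)\<^sup>2"
      by (rule convex_sq) (use assms in auto)
    also have "\<dots> \<le> \<beta>1 * hb \<beta>1 \<epsilon> g n w + (1 - \<beta>1) * ((norm (g (Suc n) w))\<^sup>2 / \<epsilon>\<^sup>2)"
    proof (rule add_mono)
      show "\<beta>1 * (norm ?m)\<^sup>2 \<le> \<beta>1 * hb \<beta>1 \<epsilon> g n w"
        using Suc assms(2) by (simp add: mult_left_mono)
      have "norm ?x \<le> norm (g (Suc n) w) / \<epsilon>"
        by (rule clip_term_le) (use assms in auto)
      then have "(norm ?x)\<^sup>2 \<le> (norm (g (Suc n) w) / \<epsilon>)\<^sup>2"
        by (rule power_mono) simp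
      then have "(norm ?x)\<^sup>2 \<le> (norm (g (Suc n) w))\<^sup>2 / \<epsilon>\<^sup>2" by (simp add: power_divide)
      then show "(1 - \<beta>1) * (norm ?x)\<^sup>2 \<le> (1 - \<beta>1) * ((norm (g (Suc n) w))\<^sup>2 / \<epsilon>\<^sup>2)"
        using assms(3) by (intro mult_left_mono) auto
    qed
    finally show ?case by simp
  qed
  have ih: "integrable M (hb \<beta>1 \<epsilon> g n) \<and> integral\<^sup>L M (hb \<beta>1 \<epsilon> g n) \<le> G\<^sup>2 / \<epsilon>\<^sup>2" for n
  proof (induction n)
    case 0
    then show ?case by simp
  next
    case (Suc n)
    have i1: "integrable M (\<lambda>w. (norm (g (Suc n) w))\<^sup>2 / \<epsilon>\<^sup>2)"
      using assms(10) by simp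
    have int0: "integrable M (\<lambda>w. \<beta>1 * hb \<beta>1 \<epsilon> g n w + (1 - \<beta>1) * ((norm (g (Suc n) w))\<^sup>2 / \<epsilon>\<^sup>2))"
      by (intro Bochner_Integration.integrable_add integrable_mult_right) (use Suc i1 in auto)
    then have int: "integrable M (hb \<beta>1 \<epsilon> g (Suc n))"
      by simp
    have i2: "integrable M (\<lambda>w. \<beta>1 * hb \<beta>1 \<epsilon> g n w)" "integrable M (\<lambda>w. (1 - \<beta>1) * ((norm (g (Suc n) w))\<^sup>2 / \<epsilon>\<^sup>2))"
      by (intro integrable_mult_right; use Suc i1 in auto)+
    have "integral\<^sup>L M (hb \<beta>1 \<epsilon> g (Suc n)) =
       \<beta>1 * integral\<^sup>L M (hb \<beta>1 \<epsilon> g n) + (1 - \<beta>1) * (integral\<^sup>L M (\<lambda>w. (norm (g (Suc n) w))\<^sup>2) / \<epsilon>\<^sup>2)"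
      using i2 by (simp only: hb.simps Bochner_Integration.integral_add integral_mult_right_zero integral_divide_zero)
    also have "\<dots> \<le> \<beta>1 * (G\<^sup>2 / \<epsilon>\<^sup>2) + (1 - \<beta>1) * (G\<^sup>2 / \<epsilon>\<^sup>2)"
    proof (rule add_mono)
      show "\<beta>1 * integral\<^sup>L M (hb \<beta>1 \<epsilon> g n) \<le> \<beta>1 * (G\<^sup>2 / \<epsilon>\<^sup>2)"
        using Suc assms(2) by (intro mult_left_mono) auto
      have "integral\<^sup>L M (\<lambda>w. (norm (g (Suc n) w))\<^sup>2) / \<epsilon>\<^sup>2 \<le> G\<^sup>2 / \<epsilon>\<^sup>2"
        using assms(11)[of "Suc n"] by (simp add: divide_right_mono)
      then show "(1 - \<beta>1) * (integral\<^sup>L M (\<lambda>w. (norm (g (Suc n) w))\<^sup>2) / \<epsilon>\<^sup>2) \<le> (1 - \<beta>1) * (G\<^sup>2 / \<epsilon>\<^sup>2)"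
        using assms(3) by (intro mult_left_mono) auto
    qed
    also have "\<dots> = G\<^sup>2 / \<epsilon>\<^sup>2" by (simp add: add_divide_distrib[symmetric] algebra_simps)
    finally show ?case using int by simp
  qed
  have b2: "G\<^sup>2 / \<epsilon>\<^sup>2 \<le> 2 * G\<^sup>2 / \<epsilon>\<^sup>2"
    by (simp add: divide_right_mono)
  show ?thesis
  proof (cases "integrable M (\<lambda>\<omega>. (norm (adopt_m \<beta>1 \<beta>2 \<epsilon> c (\<lambda>s. g s \<omega>) t))\<^sup>2)")
    case True
    have "integral\<^sup>L M (\<lambda>\<omega>. (norm (adopt_m \<beta>1 \<beta>2 \<epsilon> c (\<lambda>s. g s \<omega>) t))\<^sup>2) \<le> integral\<^sup>L M (hb \<beta>1 \<epsilon> g t)"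
      by (rule integral_mono[OF True]) (use ih pt in auto)
    then show ?thesis using ih[of t] b2 by simp
  next
    case False
    then show ?thesis by (simp add: not_integrable_integral_eq)
  qed
qed

end
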